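(* Let $d_1,d_2\in\mathbb{N}_+$ and $\boldsymbol\Theta\in[-1,1]^{d_1\times d_2}$. (a) $\max_{\pi\in[-1,1]}\mathrm{srank}(\boldsymbol\Theta-\pi)\le\mathrm{rank}(\boldsymbol\Theta)+1$. (b) If $\boldsymbol\Theta\in\mathcal{M}_{\mathrm{sgn}}(r)$, then $g(\boldsymbol\Theta)/\|g(\boldsymbol\Theta)\|_{\max}\in\mathcal{M}_{\mathrm{sgn}}(r+1)$ for every strictly monotonic function $g:\mathbb{R}\to\mathbb{R}$, where $g(\boldsymbol\Theta)$ denotes entrywise application of $g$. (c) For every dimension $d$, there exists a $d\times d$ matrix $\boldsymbol\Theta\in\mathcal{M}_{\mathrm{sgn}}(2)$ with $\mathrm{rank}(\boldsymbol\Theta)=d$.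
   Context: Sign convention: $\mathrm{sgn}(x)=1$ if $x>0$ and $-1$ otherwise, applied entrywise to matrices; $\boldsymbol\Theta-\pi$ subtracts $\pi$ from every entry. Sign rank: $\mathrm{srank}(\boldsymbol\Theta)=\min\{\mathrm{rank}(\boldsymbol\Theta'):\mathrm{sgn}(\boldsymbol\Theta')=\mathrm{sgn}(\boldsymbol\Theta)\}$. $\|\boldsymbol\Theta\|_{\max}=\max_{i,j}|\Theta_{ij}|$. For $r\in\mathbb{N}_+$, $\mathcal{M}_{\mathrm{sgn}}(r)=\{\boldsymbol\Theta:\max_{\pi\in[-1,1]}\mathrm{srank}(\boldsymbol\Theta-\pi)\le r,\ \|\boldsymbol\Theta\|_{\max}\le1\}$. *)

theory Defs
  imports "HOL-Analysis.Analysis"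
begin

definition sgnp :: "real \<Rightarrow> real" where
  "sgnp x = (if x > 0 then 1 else -1)"

definition msgn :: "real^'n^'m \<Rightarrow> real^'n^'m" where
  "msgn A = (\<chi> i j. sgnp (A $ i $ j))"

definition srank :: "real^'n^'m \<Rightarrow> nat" where
  "srank A = (LEAST k. \<exists>B. msgn B = msgn A \<and> rank B = k)"

definition msub :: "real^'n^'m \<Rightarrow> real \<Rightarrow> real^'n^'m" where
  "msub A p = (\<chi> i j. A $ i $ j - p)"

definition maxnorm :: "real^'n^'m \<Rightarrow> real" where
  "maxnorm A = Max {\<bar>A $ i $ j\<bar> | i j. True}"

definition mapm :: "(real \<Rightarrow> real) \<Rightarrow> real^'n^'m \<Rightarrow> real^'n^'m" where
  "mapm g A = (\<chi> i j. g (A $ i $ j))"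

text \<open>\<open>max_{\<pi>\<in>[-1,1]} srank(\<Theta>-\<pi>) \<le> r\<close> written as a universal bound.\<close>
definition M_sgn :: "nat \<Rightarrow> (real^'n^'m) set" where
  "M_sgn r = {A. (\<forall>p\<in>{-1..1}. srank (msub A p) \<le> r) \<and> maxnorm A \<le> 1}"

end

theory Submission
  imports Defs
begin
lemma rank_add_row:
  fixes A :: "real^'n^'m" and v :: "real^'n"
  shows "rank (\<chi> i j. A$i$j + v$j) \<le> rank A + 1"
proof -
  let ?M = "(\<chi> i j. A$i$j + v$j) :: real^'n^'m"
  have "rows ?M \<subseteq> span (insert v (rows A))"
  proof
    fix x assume "x \<in> rows ?M"
    then obtain i where x: "x = row i ?M" by (auto simp: rows_def)
    have "x = row i A + v" by (simp add: x row_def vec_eq_iff)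
    moreover have "row i A \<in> span (insert v (rows A))"
      by (rule span_base) (auto simp: rows_def)
    moreover have "v \<in> span (insert v (rows A))" by (rule span_base) auto
    ultimately show "x \<in> span (insert v (rows A))" by (simp add: span_add)
  qed
  then have "dim (rows ?M) \<le> dim (span (insert v (rows A)))"
    by (rule dim_subset)
  then have "dim (rows ?M) \<le> dim (insert v (rows A))" by simp
  also have "\<dots> \<le> dim (rows A) + 1" by (simp add: dim_insert)
  finally show ?thesis by (simp add: row_rank_def)
qed

lemma rank_neg:
  fixes A :: "real^'n^'m"
  shows "rank (\<chi> i j. - A$i$j) \<le> rank A"
proof -
  let ?M = "(\<chi> i j. - A$i$j) :: real^'n^'m"
  have "rows ?M \<subseteq> span (rows A)"
  proof
    fix x assume "x \<in> rows ?M"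
    then obtain i where x: "x = row i ?M" by (auto simp: rows_def)
    have "x = - row i A" by (simp add: x row_def vec_eq_iff)
    moreover have "row i A \<in> span (rows A)"
      by (rule span_base) (auto simp: rows_def)
    ultimately show "x \<in> span (rows A)" by (simp add: span_neg)
  qed
  then have "dim (rows ?M) \<le> dim (span (rows A))"
    by (rule dim_subset)
  then have "dim (rows ?M) \<le> dim (rows A)" by simp
  then show ?thesis by (simp add: row_rank_def)
qed

lemma srank_le: "msgn B = msgn A \<Longrightarrow> srank A \<le> rank B"
  unfolding srank_def by (rule Least_le) auto

lemma srank_cong: "msgn A = msgn A' \<Longrightarrow> srank A = srank A'"
  by (simp add: srank_def)

lemma srank_ex: "\<exists>B. msgn B = msgn A \<and> rank B = srank A"
  unfolding srank_def by (rule LeastI_ex) auto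

lemma finite_entries: "finite {f (A$i$j) | i j. True}"
proof -
  have "{f (A$i$j) | i j. True} = (\<lambda>(i,j). f (A$i$j)) ` UNIV" by auto
  then show ?thesis by simp
qed

lemma srank_neg:
  fixes A A' :: "real^'n^'m"
  assumes "\<forall>i j. sgnp (A'$i$j) = - sgnp (A$i$j)"
  shows "srank A' \<le> srank A + 1"
proof -
  obtain B where B: "msgn B = msgn A" "rank B = srank A" using srank_ex by blast
  define S where "S = insert 1 {B$i$j | i j. B$i$j > 0}"
  have "finite {B$i$j | i j. B$i$j > 0}"
    by (rule finite_subset[OF _ finite_entries[of "\<lambda>x. x" B]]) auto
  then have fS: "finite S" unfolding S_def by simp
  define e where "e = Min S / 2"
  have Spos: "\<forall>x\<in>S. x > 0" unfolding S_def by auto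
  have Sne: "S \<noteq> {}" by (simp add: S_def)
  have "Min S > 0" using Min_gr_iff[OF fS Sne] Spos by blast
  then have e0: "e > 0" by (simp add: e_def)
  have eB: "B$i$j > e" if "B$i$j > 0" for i j
  proof -
    have "B$i$j \<in> S" using that by (auto simp: S_def)
    then have "Min S \<le> B$i$j" using fS by simp
    then show ?thesis using \<open>Min S > 0\<close> by (simp add: e_def)
  qed
  define C where "C = ((\<chi> i j. (\<chi> i j. - B$i$j)$i$j + (\<chi> j. (e::real))$j) :: real^'n^'m)"
  have "rank C \<le> rank (\<chi> i j. - B$i$j :: real^'n^'m) + 1"
    unfolding C_def by (rule rank_add_row)
  also have "\<dots> \<le> rank B + 1" using rank_neg[of B] by simp
  finally have rC: "rank C \<le> srank A + 1" using B by simp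
  have "msgn C = msgn A'"
  proof -
    have "sgnp (C$i$j) = sgnp (A'$i$j)" for i j
    proof -
      have "sgnp (B$i$j) = sgnp (A$i$j)" 
      proof -
        from B(1) have "msgn B $ i $ j = msgn A $ i $ j" by simp
        then show ?thesis by (simp add: msgn_def)
      qed
      moreover have "sgnp (C$i$j) = - sgnp (B$i$j)"
        using eB[of i j] e0 by (auto simp: C_def sgnp_def)
      ultimately show ?thesis using assms by simp
    qed
    then show ?thesis by (simp add: msgn_def vec_eq_iff)
  qed
  then have "srank A' \<le> rank C" by (rule srank_le)
  with rC show ?thesis by simp
qed


lemma thresh:
  fixes E :: "real set" and P :: "real \<Rightarrow> bool"
  assumes fin: "finite E" and sub: "E \<subseteq> {-1..1}"
    and mono: "(\<forall>x\<in>E. \<forall>y\<in>E. x < y \<longrightarrow> P x \<longrightarrow> P y) \<or> (\<forall>x\<in>E. \<forall>y\<in>E. x < y \<longrightarrow> P y \<longrightarrow> P x)"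
  shows "\<exists>t\<in>{-1..1}. (\<forall>x\<in>E. P x \<longleftrightarrow> x > t) \<or> (\<forall>x\<in>E. P x \<longleftrightarrow> x \<le> t)"
proof (cases "\<forall>x\<in>E. P x")
  case True
  then have "\<forall>x\<in>E. P x \<longleftrightarrow> x \<le> 1" using sub by auto
  then show ?thesis by (intro bexI[of _ 1]) auto
next
  case F1: False
  show ?thesis
  proof (cases "\<forall>x\<in>E. \<not> P x")
    case True
    then have "\<forall>x\<in>E. P x \<longleftrightarrow> x > 1" using sub by auto
    then show ?thesis by (intro bexI[of _ 1]) auto
  next
    case F2: False
    from mono show ?thesis
    proof
      assume up: "\<forall>x\<in>E. \<forall>y\<in>E. x < y \<longrightarrow> P x \<longrightarrow> P y"
      define N where "N = {x\<in>E. \<not> P x}"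
      have fN: "finite N" "N \<noteq> {}" using fin F1 by (auto simp: N_def)
      define t where "t = Max N"
      have tN: "t \<in> N" using fN by (simp add: t_def)
      have tE: "t \<in> E" "\<not> P t" using tN by (auto simp: N_def)
      have "\<forall>x\<in>E. P x \<longleftrightarrow> x > t"
      proof
        fix x assume x: "x \<in> E"
        show "P x \<longleftrightarrow> x > t"
        proof
          assume Px: "P x"
          show "x > t"
          proof (rule ccontr)
            assume "\<not> x > t"
            then have "x < t \<or> x = t" by auto
            then show False using up x tE Px by auto
          qed
        next
          assume xt: "x > t"
          show "P x"
          proof (rule ccontr)
            assume "\<not> P x" then have "x \<in> N" using x by (simp add: N_def)
            then have "x \<le> t" using fN by (simp add: t_def)
            with xt show False by simp
          qed
        qed
      qed
      then show ?thesis using tE sub by blast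
    next
      assume down: "\<forall>x\<in>E. \<forall>y\<in>E. x < y \<longrightarrow> P y \<longrightarrow> P x"
      define N where "N = {x\<in>E. P x}"
      have fN: "finite N" "N \<noteq> {}" using fin F2 by (auto simp: N_def)
      define t where "t = Max N"
      have tN: "t \<in> N" using fN by (simp add: t_def)
      have tE: "t \<in> E" "P t" using tN by (auto simp: N_def)
      have "\<forall>x\<in>E. P x \<longleftrightarrow> x \<le> t"
      proof
        fix x assume x: "x \<in> E"
        show "P x \<longleftrightarrow> x \<le> t"
        proof
          assume Px: "P x"
          then have "x \<in> N" using x by (simp add: N_def)
          then show "x \<le> t" using fN by (simp add: t_def)
        next
          assume xt: "x \<le> t"
          then have "x < t \<or> x = t" by auto
          then show "P x" using down x tE by auto
        qed
      qed
      then show ?thesis using tE sub by blast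
    qed
  qed
qed

lemma entry_le_maxnorm: "\<bar>A$i$j\<bar> \<le> maxnorm A"
  unfolding maxnorm_def
  by (rule Max_ge) (auto intro: finite_entries[of "\<lambda>x. \<bar>x\<bar>" A, simplified])

lemma parta:
  fixes \<Theta> :: "real^'n^'m"
  shows "srank (msub \<Theta> p) \<le> rank \<Theta> + 1"
proof -
  have e: "msub \<Theta> p = (\<chi> i j. \<Theta>$i$j + (\<chi> j. - p)$j)" by (simp add: msub_def)
  have "srank (msub \<Theta> p) \<le> rank (msub \<Theta> p)" by (rule srank_le) simp
  also have "\<dots> \<le> rank \<Theta> + 1" unfolding e by (rule rank_add_row)
  finally show ?thesis .
qed

lemma partb:
  fixes \<Theta> :: "real^'n^'m" and g :: "real \<Rightarrow> real"
  assumes T: "\<Theta> \<in> M_sgn r"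
   and gm: "(\<forall>x y. x < y \<longrightarrow> g x < g y) \<or> (\<forall>x y. x < y \<longrightarrow> g y < g x)"
  shows "(inverse (maxnorm (mapm g \<Theta>))) *\<^sub>R mapm g \<Theta> \<in> M_sgn (r + 1)"
proof -
  define G where "G = mapm g \<Theta>"
  define c where "c = maxnorm G"
  define B where "B = inverse c *\<^sub>R G"
  have entB: "B$i$j = inverse c * g (\<Theta>$i$j)" for i j by (simp add: B_def G_def mapm_def)
  have Gle: "\<bar>G$i$j\<bar> \<le> c" for i j unfolding c_def by (rule entry_le_maxnorm)
  have c0: "c \<ge> 0" using Gle[of undefined undefined] by linarith
  have Tle: "\<bar>\<Theta>$i$j\<bar> \<le> 1" for i j
    using entry_le_maxnorm[of \<Theta> i j] T by (simp add: M_sgn_def)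
  have nB: "maxnorm B \<le> 1"
    unfolding maxnorm_def
  proof (rule Max.boundedI)
    show "finite {\<bar>B $ i $ j\<bar> |i j. True}" using finite_entries[of "\<lambda>x. \<bar>x\<bar>" B] by simp
    show "{\<bar>B $ i $ j\<bar> |i j. True} \<noteq> {}" by auto
    fix a assume "a \<in> {\<bar>B $ i $ j\<bar> |i j. True}"
    then obtain i j where a: "a = \<bar>B$i$j\<bar>" by auto
    show "a \<le> 1"
    proof (cases "c = 0")
      case True then show ?thesis by (simp add: a entB)
    next
      case False then have cp: "c > 0" using c0 by simp
      have "a = inverse c * \<bar>G$i$j\<bar>" using cp by (simp add: a entB G_def mapm_def abs_mult)
      also have "\<dots> \<le> inverse c * c" by (rule mult_left_mono[OF Gle]) (simp add: c0)
      also have "\<dots> = 1" using cp by simp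
      finally show ?thesis .
    qed
  qed
  have "\<forall>p\<in>{-1..1}. srank (msub B p) \<le> r + 1"
  proof
    fix p :: real assume p: "p \<in> {-1..1}"
    define P where "P x = (inverse c * g x - p > 0)" for x
    define E where "E = {\<Theta>$i$j | i j. True}"
    have fE: "finite E" using finite_entries[of "\<lambda>x. x" \<Theta>] by (simp add: E_def)
    have sE: "E \<subseteq> {-1..1}" using Tle by (auto simp: E_def abs_le_iff)
    have mP: "(\<forall>x\<in>E. \<forall>y\<in>E. x < y \<longrightarrow> P x \<longrightarrow> P y) \<or> (\<forall>x\<in>E. \<forall>y\<in>E. x < y \<longrightarrow> P y \<longrightarrow> P x)"
    proof (cases "c = 0")
      case True then show ?thesis by (simp add: P_def)
    next
      case False then have ic: "inverse c > 0" using c0 by simp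
      from gm show ?thesis
      proof
        assume inc: "\<forall>x y. x < y \<longrightarrow> g x < g y"
        have "inverse c * g x < inverse c * g y" if "x < y" for x y using inc that ic by simp
        then have "\<forall>x\<in>E. \<forall>y\<in>E. x < y \<longrightarrow> P x \<longrightarrow> P y" unfolding P_def by force
        then show ?thesis ..
      next
        assume dec: "\<forall>x y. x < y \<longrightarrow> g y < g x"
        have "inverse c * g y < inverse c * g x" if "x < y" for x y using dec that ic by simp
        then have "\<forall>x\<in>E. \<forall>y\<in>E. x < y \<longrightarrow> P y \<longrightarrow> P x" unfolding P_def by force
        then show ?thesis ..
      qed
    qed
    obtain t where t: "t \<in> {-1..1}" and tc: "(\<forall>x\<in>E. P x \<longleftrightarrow> x > t) \<or> (\<forall>x\<in>E. P x \<longleftrightarrow> x \<le> t)"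
      using thresh[OF fE sE mP] by blast
    have srt: "srank (msub \<Theta> t) \<le> r" using T t by (simp add: M_sgn_def)
    have inE: "\<Theta>$i$j \<in> E" for i j by (auto simp: E_def)
    from tc show "srank (msub B p) \<le> r + 1"
    proof
      assume h: "\<forall>x\<in>E. P x \<longleftrightarrow> x > t"
      have "msgn (msub B p) = msgn (msub \<Theta> t)"
      proof -
        have "sgnp (msub B p $i$j) = sgnp (msub \<Theta> t $i$j)" for i j
        proof -
          have "P (\<Theta>$i$j) \<longleftrightarrow> \<Theta>$i$j > t" using h inE by blast
          then show ?thesis by (auto simp: msub_def entB sgnp_def P_def)
        qed
        then show ?thesis by (simp add: msgn_def vec_eq_iff)
      qed
      then have "srank (msub B p) = srank (msub \<Theta> t)" by (rule srank_cong)
      with srt show ?thesis by simp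
    next
      assume h: "\<forall>x\<in>E. P x \<longleftrightarrow> x \<le> t"
      have "\<forall>i j. sgnp (msub B p $i$j) = - sgnp (msub \<Theta> t $i$j)"
      proof (intro allI)
        fix i j
        have "P (\<Theta>$i$j) \<longleftrightarrow> \<Theta>$i$j \<le> t" using h inE by blast
        then show "sgnp (msub B p $i$j) = - sgnp (msub \<Theta> t $i$j)"
          by (auto simp: msub_def entB sgnp_def P_def)
      qed
      then have "srank (msub B p) \<le> srank (msub \<Theta> t) + 1" by (rule srank_neg)
      with srt show ?thesis by simp
    qed
  qed
  then show ?thesis using nB by (simp add: M_sgn_def B_def c_def G_def)
qed

lemma partc: "\<exists>A :: real^'d^'d. A \<in> M_sgn 2 \<and> rank A = CARD('d)"
proof -
  obtain f :: "'d \<Rightarrow> nat" where bf: "bij_betw f UNIV {0..<CARD('d)}"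
    using ex_bij_betw_finite_nat[of "UNIV::'d set"] by auto
  have finj: "inj f" using bf bij_betw_imp_inj_on by auto
  have fb: "f i < CARD('d)" for i using bf by (auto simp: bij_betw_def)
  define A where "A = ((\<chi> i j. if f j \<le> f i then 1 else 0) :: real^'d^'d)"
  have mn: "maxnorm A \<le> 1"
    unfolding maxnorm_def
  proof (rule Max.boundedI)
    show "finite {\<bar>A $ i $ j\<bar> |i j. True}" using finite_entries[of "\<lambda>x. \<bar>x\<bar>" A] by simp
    show "{\<bar>A $ i $ j\<bar> |i j. True} \<noteq> {}" by auto
    fix a assume "a \<in> {\<bar>A $ i $ j\<bar> |i j. True}"
    then show "a \<le> 1" by (auto simp: A_def)
  qed
  have sr: "srank (msub A p) \<le> 2" for p :: real
  proof -
    define n where "n = real CARD('d)"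
    define s where "s = (if p < 0 then n + 1 else if p < 1 then 1/2 else -(n+1))"
    define w where "w = ((\<chi> j. real (f j) + s) :: real^'d)"
    define M0 where "M0 = ((\<chi> i j. (0::real^'d^'d)$i$j + w$j) :: real^'d^'d)"
    define C where "C = ((\<chi> i j. (transpose M0)$i$j + (\<chi> j. - real (f j))$j) :: real^'d^'d)"
    have "rank M0 \<le> 1" using rank_add_row[of "0::real^'d^'d" w] by (simp add: M0_def)
    then have "rank (transpose M0) \<le> 1" by (simp add: rank_transpose)
    then have rC: "rank C \<le> 2" using rank_add_row[of "transpose M0" "\<chi> j. - real (f j)"]
      by (simp add: C_def)
    have Ce: "C$i$j = real (f i) + s - real (f j)" for i j
      by (simp add: C_def M0_def w_def transpose_def)
    have "msgn C = msgn (msub A p)"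
    proof -
      have "sgnp (C$i$j) = sgnp (msub A p $i$j)" for i j
      proof -
        have fi: "real (f i) < n" "real (f j) < n" using fb by (auto simp: n_def)
        show ?thesis
        proof (cases "p < 0")
          case True then show ?thesis using fi by (simp add: Ce s_def msub_def A_def sgnp_def)
        next
          case F: False
          show ?thesis
          proof (cases "p < 1")
            case True
            have key: "(0 < real (f i) + 1/2 - real (f j)) \<longleftrightarrow> f j \<le> f i"
            proof (cases "f j \<le> f i")
              case True
              then have "real (f j) \<le> real (f i)" by simp
              then show ?thesis using True by simp
            next
              case False
              then have "real (f i + 1) \<le> real (f j)" by simp
              then show ?thesis using False by simp
            qed
            show ?thesis using True F key by (simp add: Ce s_def msub_def A_def sgnp_def)
          next
            case False then show ?thesis using F fi by (simp add: Ce s_def msub_def A_def sgnp_def)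
          qed
        qed
      qed
      then show ?thesis by (simp add: msgn_def vec_eq_iff)
    qed
    then have "srank (msub A p) \<le> rank C" by (rule srank_le)
    with rC show ?thesis by simp
  qed
  have ker: "x = 0" if "A *v x = 0" for x
  proof -
    have "\<forall>i. f i = k \<longrightarrow> x$i = 0" for k
    proof (induction k rule: less_induct)
      case (less k)
      show ?case
      proof (intro allI impI)
        fix i assume fi: "f i = k"
        have "0 = (A *v x)$i" using that by simp
        also have "\<dots> = (\<Sum>j\<in>UNIV. A$i$j * x$j)" by (simp add: matrix_vector_mult_def)
        also have "\<dots> = (\<Sum>j\<in>UNIV. if j = i then x$i else 0)"
        proof (rule sum.cong[OF refl])
          fix j
          show "A$i$j * x$j = (if j = i then x$i else 0)"
          proof (cases "j = i")
            case True then show ?thesis by (simp add: A_def)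
          next
            case False
            then have "f j \<noteq> f i" using finj by (auto simp: inj_def)
            have xj: "x$j = 0" if "f j \<le> f i"
            proof -
              have "f j < k" using that \<open>f j \<noteq> f i\<close> fi by simp
              then show ?thesis using less.IH by blast
            qed
            then show ?thesis using False by (auto simp: A_def)
          qed
        qed
        also have "\<dots> = x$i" by simp
        finally show "x$i = 0" by simp
      qed
    qed
    then show ?thesis by (simp add: vec_eq_iff)
  qed
  have "inj ((*v) A)"
  proof (rule injI)
    fix x y assume "A *v x = A *v y"
    then have "A *v (x - y) = 0" by (simp add: matrix_vector_mult_diff_distrib)
    then have "x - y = 0" by (rule ker)
    then show "x = y" by simp
  qed
  then have rk: "rank A = CARD('d)" by (simp add: full_rank_injective)
  show ?thesis using mn sr rk by (intro exI[of _ A]) (auto simp: M_sgn_def)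
qed


theorem proposition2:
  fixes \<Theta> :: "real^'n^'m"
  shows "(maxnorm \<Theta> \<le> 1 \<longrightarrow> (\<forall>p\<in>{-1..1}. srank (msub \<Theta> p) \<le> rank \<Theta> + 1))
    \<and> (\<forall>(r::nat) (g::real \<Rightarrow> real). r \<ge> 1 \<longrightarrow> \<Theta> \<in> M_sgn r \<longrightarrow>
          ((\<forall>x y. x < y \<longrightarrow> g x < g y) \<or> (\<forall>x y. x < y \<longrightarrow> g y < g x)) \<longrightarrow>
          (inverse (maxnorm (mapm g \<Theta>))) *\<^sub>R mapm g \<Theta> \<in> M_sgn (r + 1))
    \<and> (\<exists>A :: real^'d^'d. A \<in> M_sgn 2 \<and> rank A = CARD('d))"
    using parta[of \<Theta>] partb[of \<Theta>] partc by blast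

end
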